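(* Let $0<\varepsilon\le1$ and $\alpha\in(0,1)$. Then for every $m\in\{0,1,2,\dots\}$, $x^{2m}e^{-\alpha x^2/(2\sqrt\varepsilon)}\in D(S_\varepsilon)$ and $$S_\varepsilon\, x^{2m}e^{-\alpha x^2/(2\sqrt\varepsilon)}=-\frac{i}{2\sqrt\varepsilon}\sum_{k=0}^m\binom mk(-2\sqrt\varepsilon)^k\,\frac{d^k}{d\alpha^k}\Big(\log\frac{1+\alpha}{1-\alpha}\Big)\,x^{2m-2k}e^{-\alpha x^2/(2\sqrt\varepsilon)}.$$
   Context: Work in $L^2(\mathbb{R})$. Let $q$ be multiplication by $x$ and $p=-i\,d/dx$. Let $t=q^{-1}p$ with $D(t)=\{f\in D(p):pf\in D(q^{-1})\}$ and $L^2_0$ the subspace of even functions. Define $S_\varepsilon$ in $L^2_0$ by $D(S_\varepsilon)=\{f\in L^2_0\cap\bigcap_{n\ge0}D(t^{2n+1}):\lim_{N\to\infty}\sum_{n=0}^N\frac{(-1)^n}{2n+1}(\sqrt\varepsilon t)^{2n+1}f$ exists in norm$\}$, $S_\varepsilon f=-\varepsilon^{-1/2}\sum_{n\ge0}\frac{(-1)^n}{2n+1}(\sqrt\varepsilon t)^{2n+1}f$. *)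

theory Defs
  imports "HOL-Analysis.Analysis"
begin

text \<open>Elements of L^2(R) are represented by (Borel measurable) functions real => complex,
  considered up to equality almost everywhere w.r.t. Lebesgue measure.\<close>

definition sqint :: "(real \<Rightarrow> complex) \<Rightarrow> bool" where
  "sqint f \<longleftrightarrow> f \<in> borel_measurable lborel \<and> integrable lborel (\<lambda>x. (cmod (f x))^2)"

definition l2norm :: "(real \<Rightarrow> complex) \<Rightarrow> real" where
  "l2norm f = sqrt (LINT x|lborel. (cmod (f x))^2)"

definition test_fun :: "(real \<Rightarrow> real) \<Rightarrow> bool" where
  "test_fun \<phi> \<longleftrightarrow> (\<forall>n x. (deriv ^^ n) \<phi> differentiable (at x)) \<and> bounded {x. \<phi> x \<noteq> 0}"

text \<open>Graph of the momentum operator p = -i d/dx with its self-adjoint domain H^1: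
  p f = g iff f, g in L^2 and the weak derivative of f is i*g.\<close>
definition p_rel :: "(real \<Rightarrow> complex) \<Rightarrow> (real \<Rightarrow> complex) \<Rightarrow> bool" where
  "p_rel f g \<longleftrightarrow> sqint f \<and> sqint g \<and>
     (\<forall>\<phi>. test_fun \<phi> \<longrightarrow>
        (LINT x|lborel. f x * complex_of_real (deriv \<phi> x))
          = - (LINT x|lborel. \<i> * g x * complex_of_real (\<phi> x)))"

text \<open>Graph of t = q^{-1} p, with D(t) = {f in D(p). p f in D(q^{-1})}.\<close>
definition t_rel :: "(real \<Rightarrow> complex) \<Rightarrow> (real \<Rightarrow> complex) \<Rightarrow> bool" where
  "t_rel f h \<longleftrightarrow> (\<exists>g. p_rel f g \<and> sqint h \<and> (AE x in lborel. h x = g x / complex_of_real x))"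

definition even_fun :: "(real \<Rightarrow> complex) \<Rightarrow> bool" where
  "even_fun f \<longleftrightarrow> (AE x in lborel. f (- x) = f x)"

text \<open>Graph of S_eps: f in D(S_eps) and S_eps f = h.  The sequence T is the sequence of
  iterates T j = t^j f (f in the intersection of all D(t^(2n+1))).\<close>
definition S_graph :: "real \<Rightarrow> (real \<Rightarrow> complex) \<Rightarrow> (real \<Rightarrow> complex) \<Rightarrow> bool" where
  "S_graph \<epsilon> f h \<longleftrightarrow> sqint f \<and> even_fun f \<and>
     (\<exists>T L. T 0 = f \<and> (\<forall>j. t_rel (T j) (T (Suc j))) \<and> sqint L \<and>
        ((\<lambda>N. l2norm (\<lambda>x. (\<Sum>n\<le>N. complex_of_real ((-1)^n / real (2*n+1) * (sqrt \<epsilon>)^(2*n+1))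
                                   * T (2*n+1) x) - L x)) \<longlonglongrightarrow> 0) \<and>
        (AE x in lborel. h x = - complex_of_real (1 / sqrt \<epsilon>) * L x))"

definition S_dom :: "real \<Rightarrow> (real \<Rightarrow> complex) set" where
  "S_dom \<epsilon> = {f. \<exists>h. S_graph \<epsilon> f h}"

end

theory Submission
  imports Defs "HOL-Probability.Probability"
begin

lemma gauss_int:
  fixes c :: real assumes c: "0 < c"
  shows "integrable lborel (\<lambda>x. x^k * exp (- c * x^2))"
proof -
  define \<sigma> where "\<sigma> = 1 / sqrt (2*c)"
  have "\<sigma> > 0" using c by (simp add: \<sigma>_def)
  have s2: "2 * \<sigma>^2 = 1 / c" using c by (simp add: \<sigma>_def power_divide)
  have "integrable lborel (\<lambda>x. sqrt (2*pi*\<sigma>^2) * (normal_density 0 \<sigma> x * (x - 0)^k))"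
    using \<open>\<sigma> > 0\<close> by (rule_tac integrable_mult_right) (rule integrable_normal_moment)
  moreover have "(\<lambda>x. sqrt (2*pi*\<sigma>^2) * (normal_density 0 \<sigma> x * (x - 0)^k)) = (\<lambda>x. x^k * exp (- c * x^2))"
  proof
    fix x
    have "\<sigma> > 0" using c by (simp add: \<sigma>_def)
    then have pos: "sqrt (2*pi*\<sigma>^2) > 0" by simp
    have "-(x - 0)\<^sup>2 / (2 * \<sigma>\<^sup>2) = - c * x^2" by (simp add: s2)
    then show "sqrt (2*pi*\<sigma>^2) * (normal_density 0 \<sigma> x * (x - 0)^k) = x^k * exp (- c * x^2)"
      using pos \<open>\<sigma> > 0\<close> unfolding normal_density_def by (simp add: field_simps)
  qed
  ultimately show ?thesis by (simp only:)
qed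

lemma gauss_int2:
  fixes c :: real assumes c: "0 < c"
  shows "integrable lborel (\<lambda>x. (1 + x^2)^N * exp (- c * x^2))"
proof -
  have "(\<lambda>x. (1 + x^2)^N * exp (- c * x^2)) = (\<lambda>x. \<Sum>i\<le>N. real (N choose i) * (x^(2*i) * exp (- c * x^2)))"
  proof
    fix x :: real
    have "(1 + x^2)^N = (x^2 + 1)^N" by (simp add: add.commute)
    also have "\<dots> = (\<Sum>i\<le>N. real (N choose i) * x^(2*i))"
      by (simp add: binomial_ring power_mult)
    finally show "(1 + x^2)^N * exp (- c * x^2) = (\<Sum>i\<le>N. real (N choose i) * (x^(2*i) * exp (- c * x^2)))"
      by (simp add: sum_distrib_right mult.assoc)
  qed
  moreover have "integrable lborel (\<lambda>x. \<Sum>i\<le>N. real (N choose i) * (x^(2*i) * exp (- c * x^2)))"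
    
    apply (rule Bochner_Integration.integrable_sum)
    apply (rule integrable_mult_right)
    by (rule gauss_int[OF c])
  ultimately show ?thesis by simp
qed

lemma sqint_bound:
  fixes f :: "real \<Rightarrow> complex" and c C :: real
  assumes meas: "f \<in> borel_measurable lborel" and c: "0 < c"
    and bd: "\<And>x. cmod (f x) \<le> C * ((1 + x^2)^N * exp (- c * x^2))"
  shows "sqint f \<and> l2norm f \<le> C * sqrt (LINT x|lborel. (1 + x^2)^(2*N) * exp (- (2*c) * x^2))"
proof -
  have C: "C \<ge> 0"
  proof -
    have "0 \<le> C * ((1 + 0^2)^N * exp (- c * 0^2))" using bd[of 0] norm_ge_zero order_trans by blast
    then show ?thesis by simp
  qed
  define W where "W x = C^2 * ((1 + x^2)^(2*N) * exp (- (2*c) * x^2))" for x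
  have iW: "integrable lborel W" unfolding W_def
    by (rule integrable_mult_right) (rule gauss_int2, use c in simp)
  have le: "(cmod (f x))^2 \<le> W x" for x
  proof -
    have "(cmod (f x))^2 \<le> (C * ((1 + x^2)^N * exp (- c * x^2)))^2"
      using bd[of x] by (intro power_mono) auto
    also have "\<dots> = W x"
      by (simp add: W_def power_mult_distrib power_mult[symmetric] mult.commute exp_of_nat_mult[symmetric] flip: exp_of_nat_mult)
    finally show ?thesis .
  qed
  have Wpos: "W x \<ge> 0" for x using C unfolding W_def by simp
  have mf: "(\<lambda>x. (cmod (f x))^2) \<in> borel_measurable lborel" using meas by measurable
  have i: "integrable lborel (\<lambda>x. (cmod (f x))^2)"
    by (rule Bochner_Integration.integrable_bound[OF iW mf]) (use le Wpos in auto)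
  have "l2norm f \<le> sqrt (LINT x|lborel. W x)"
    unfolding l2norm_def by (intro real_sqrt_le_mono integral_mono i iW le)
  also have "(LINT x|lborel. W x) = C^2 * (LINT x|lborel. (1 + x^2)^(2*N) * exp (- (2*c) * x^2))"
    unfolding W_def by simp
  also have "sqrt \<dots> = C * sqrt (LINT x|lborel. (1 + x^2)^(2*N) * exp (- (2*c) * x^2))"
    using C by (simp add: real_sqrt_mult)
  finally show ?thesis using i meas unfolding sqint_def by simp
qed

lemma p_rel_smooth:
  fixes f g :: "real \<Rightarrow> complex"
  assumes der: "\<And>x. (f has_vector_derivative (\<i> * g x)) (at x)"
    and cont: "continuous_on UNIV g"
    and sf: "sqint f" and sg: "sqint g"
  shows "p_rel f g"
  unfolding p_rel_def
proof (intro conjI sf sg allI impI)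
  fix \<phi> :: "real \<Rightarrow> real"
  assume tf: "test_fun \<phi>"
  have d0: "\<phi> differentiable (at x)" for x using tf unfolding test_fun_def
    by (metis funpow_0)
  have d1: "deriv \<phi> differentiable (at x)" for x using tf unfolding test_fun_def
    by (metis funpow_0 funpow_Suc_right o_apply One_nat_def)
  have dphi: "(\<phi> has_real_derivative deriv \<phi> x) (at x)" for x
    using d0 DERIV_deriv_iff_real_differentiable by blast
  have cphi: "continuous_on UNIV \<phi>"
    by (intro continuous_at_imp_continuous_on ballI differentiable_imp_continuous_within d0)
  have cdphi: "continuous_on UNIV (deriv \<phi>)"
    by (intro continuous_at_imp_continuous_on ballI differentiable_imp_continuous_within d1)
  have cf: "continuous_on UNIV f"
    using der by (intro continuous_at_imp_continuous_on ballI has_vector_derivative_continuous) auto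
  obtain R where R: "R > 0" "\<And>x. \<phi> x \<noteq> 0 \<Longrightarrow> norm x \<le> R"
    using tf unfolding test_fun_def bounded_pos by auto
  have z0: "\<phi> x = 0" if "R < \<bar>x\<bar>" for x using R(2)[of x] that by auto
  have z1: "deriv \<phi> x = 0" if "R < \<bar>x\<bar>" for x
  proof -
    have "eventually (\<lambda>y. y \<in> - {-R..R}) (nhds x)"
      by (rule eventually_nhds_in_open) (use that in auto)
    then have "eventually (\<lambda>y. \<phi> y = (\<lambda>_. 0) y) (nhds x)"
      by (rule eventually_mono) (use z0 in auto)
    then have "deriv \<phi> x = deriv (\<lambda>_. 0) x" by (rule deriv_cong_ev) simp
    then show ?thesis by simp
  qed
  define a where "a = - (R + 1)"
  define b where "b = R + 1"
  have ab: "a \<le> b" using R by (simp add: a_def b_def)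
  define H where "H x = f x * complex_of_real (deriv \<phi> x)" for x
  define K where "K x = \<i> * g x * complex_of_real (\<phi> x)" for x
  have Hi: "H x = indicator {a..b} x *\<^sub>R H x" for x
    using z1[of x] by (cases "R < \<bar>x\<bar>") (auto simp: H_def a_def b_def indicator_def)
  have Ki: "K x = indicator {a..b} x *\<^sub>R K x" for x
    using z0[of x] by (cases "R < \<bar>x\<bar>") (auto simp: K_def a_def b_def indicator_def)
  have cH: "continuous_on {a..b} H" unfolding H_def
    by (intro continuous_intros continuous_on_subset[OF cf] continuous_on_subset[OF cdphi]) auto
  have cK: "continuous_on {a..b} K" unfolding K_def
    by (intro continuous_intros continuous_on_subset[OF cont] continuous_on_subset[OF cphi]) auto
  have iH: "integrable lborel (\<lambda>x. indicator {a..b} x *\<^sub>R H x)"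
    using borel_integrable_atLeastAtMost'[OF cH] unfolding set_integrable_def .
  have iK: "integrable lborel (\<lambda>x. indicator {a..b} x *\<^sub>R K x)"
    using borel_integrable_atLeastAtMost'[OF cK] unfolding set_integrable_def .
  define P where "P x = f x * complex_of_real (\<phi> x)" for x
  have "integral\<^sup>L lborel (\<lambda>x. indicator {a .. b} x *\<^sub>R (H x + K x)) = P b - P a"
  proof (rule integral_FTC_atLeastAtMost[OF ab])
    fix x assume "a \<le> x" "x \<le> b"
    have "(P has_vector_derivative (f x * complex_of_real (deriv \<phi> x) + \<i> * g x * complex_of_real (\<phi> x))) (at x)"
      unfolding P_def by (intro has_vector_derivative_mult der has_vector_derivative_of_real dphi)
    then show "(P has_vector_derivative (H x + K x)) (at x within {a..b})"
      unfolding H_def K_def by (rule has_vector_derivative_at_within)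
  qed (intro continuous_intros cH cK)
  also have "P b - P a = 0" using z0[of a] z0[of b] R by (simp add: P_def a_def b_def)
  finally have "integral\<^sup>L lborel (\<lambda>x. indicator {a .. b} x *\<^sub>R H x + indicator {a .. b} x *\<^sub>R K x) = 0"
    by (simp add: scaleR_add_right)
  then have "integral\<^sup>L lborel (\<lambda>x. indicator {a .. b} x *\<^sub>R H x) + integral\<^sup>L lborel (\<lambda>x. indicator {a .. b} x *\<^sub>R K x) = 0"
    using Bochner_Integration.integral_add[OF iH iK] by simp
  moreover have "(\<lambda>x. indicator {a .. b} x *\<^sub>R H x) = H" by (rule ext) (rule Hi[symmetric])
  moreover have "(\<lambda>x. indicator {a .. b} x *\<^sub>R K x) = K" by (rule ext) (rule Ki[symmetric])
  ultimately have "integral\<^sup>L lborel H = - integral\<^sup>L lborel K"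
    by (simp add: eq_neg_iff_add_eq_0)
  then show "(LINT x|lborel. f x * complex_of_real (deriv \<phi> x)) = - (LINT x|lborel. \<i> * g x * complex_of_real (\<phi> x))"
    unfolding H_def K_def .
qed

definition ff :: "nat \<Rightarrow> nat \<Rightarrow> real" where "ff j k = real (j choose k) * fact k"

lemma ff_Suc: "ff (Suc j) (Suc k) = ff j (Suc k) + real (Suc k) * ff j k"
  unfolding ff_def by (simp add: algebra_simps)

lemma ff_zero: "j < k \<Longrightarrow> ff j k = 0" by (simp add: ff_def)

lemma ff_0 [simp]: "ff j 0 = 1" by (simp add: ff_def)

lemma choose_rel: "real (m - k) * real (m choose k) = real (Suc k) * real (m choose Suc k)"
proof -
  have "(m - k) * (m choose k) = Suc k * (m choose Suc k)"
    by (metis binomial_absorb_comp binomial_absorption)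
  then show ?thesis by (metis of_nat_mult)
qed

definition Ac :: "nat \<Rightarrow> real \<Rightarrow> nat \<Rightarrow> nat \<Rightarrow> complex" where
  "Ac m c j k = of_nat (m choose k) * (-1)^k * (2*\<i>)^j * complex_of_real (ff j k * c^(j-k))"

lemma Ac_rec0: "- 2 * complex_of_real c * Ac m c j 0 = \<i> * Ac m c (Suc j) 0"
  by (simp add: Ac_def algebra_simps)

lemma ff_c: "c * (ff j (Suc k) * c^(j - Suc k)) = ff j (Suc k) * c^(j - k)"
proof (cases "j \<le> k")
  case True then show ?thesis by (simp add: ff_zero)
next
  case False
  then have "j - k = Suc (j - Suc k)" by simp
  then show ?thesis by simp
qed

lemma Ac_rec1:
  "of_nat (2 * (m - k)) * Ac m c j k - 2 * complex_of_real c * Ac m c j (Suc k) = \<i> * Ac m c (Suc j) (Suc k)"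
proof -
  define Z where "Z = (2*\<i>)^j"
  define B where "B = complex_of_real (real (m choose Suc k)) * (-1)^Suc k"
  have e1: "\<i> * Ac m c (Suc j) (Suc k) = B * (-2) * Z * complex_of_real ((ff j (Suc k) + real (Suc k) * ff j k) * c^(j-k))"
    unfolding Ac_def B_def Z_def ff_Suc by (simp add: algebra_simps)
  have e2: "2 * complex_of_real c * Ac m c j (Suc k) = B * 2 * Z * complex_of_real (ff j (Suc k) * c^(j-k))"
  proof -
    have "2 * complex_of_real c * Ac m c j (Suc k) = B * 2 * Z * complex_of_real (c * (ff j (Suc k) * c^(j - Suc k)))"
      unfolding Ac_def B_def Z_def by (simp add: algebra_simps)
    then show ?thesis by (simp only: ff_c)
  qed
  have n2: "(of_nat (2*(m-k))::complex) = 2 * of_nat (m-k)" by simp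
  have e3: "of_nat (2 * (m - k)) * Ac m c j k = B * (-2) * Z * complex_of_real (real (Suc k) * ff j k * c^(j-k))"
  proof -
    have "of_nat (2 * (m - k)) * Ac m c j k = - 2 * (-1)^Suc k * Z * complex_of_real ((real (m - k) * real (m choose k)) * ff j k * c^(j-k))"
      unfolding Ac_def Z_def n2 by (simp add: algebra_simps)
    also have "\<dots> = B * (-2) * Z * complex_of_real (real (Suc k) * ff j k * c^(j-k))"
      unfolding choose_rel B_def by (simp add: algebra_simps)
    finally show ?thesis .
  qed
  show ?thesis unfolding e1 e2 e3 by (simp add: algebra_simps)
qed

lemma Ac_sum:
  fixes g :: "nat \<Rightarrow> complex"
  shows "(\<Sum>k\<le>m. Ac m c j k * (of_nat (2*(m-k)) * g (m-k-1) - 2 * complex_of_real c * g (m-k)))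
       = \<i> * (\<Sum>k\<le>m. Ac m c (Suc j) k * g (m-k))"
proof -
  have S1: "(\<Sum>k\<le>m. Ac m c j k * (of_nat (2*(m-k)) * g (m-k-1))) = (\<Sum>k<m. of_nat (2*(m-k)) * Ac m c j k * g (m - Suc k))"
  proof -
    have "(\<Sum>k\<le>m. Ac m c j k * (of_nat (2*(m-k)) * g (m-k-1))) = (\<Sum>k<Suc m. Ac m c j k * (of_nat (2*(m-k)) * g (m-k-1)))"
      by (simp only: lessThan_Suc_atMost)
    also have "\<dots> = (\<Sum>k<m. Ac m c j k * (of_nat (2*(m-k)) * g (m-k-1)))" by simp
    also have "\<dots> = (\<Sum>k<m. of_nat (2*(m-k)) * Ac m c j k * g (m - Suc k))"
      by (intro sum.cong refl) (simp add: algebra_simps)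
    finally show ?thesis .
  qed
  have S2: "(\<Sum>k\<le>m. Ac m c j k * (2 * complex_of_real c * g (m-k)))
     = 2 * complex_of_real c * Ac m c j 0 * g m + (\<Sum>k<m. 2 * complex_of_real c * Ac m c j (Suc k) * g (m - Suc k))"
    by (subst sum.atMost_shift) (simp add: algebra_simps)
  have S3: "\<i> * (\<Sum>k\<le>m. Ac m c (Suc j) k * g (m-k))
     = \<i> * Ac m c (Suc j) 0 * g m + (\<Sum>k<m. \<i> * Ac m c (Suc j) (Suc k) * g (m - Suc k))"
    by (subst sum.atMost_shift) (simp add: algebra_simps sum_distrib_left)
  have "(\<Sum>k\<le>m. Ac m c j k * (of_nat (2*(m-k)) * g (m-k-1) - 2 * complex_of_real c * g (m-k)))
      = (\<Sum>k\<le>m. Ac m c j k * (of_nat (2*(m-k)) * g (m-k-1))) - (\<Sum>k\<le>m. Ac m c j k * (2 * complex_of_real c * g (m-k)))"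
    by (simp add: right_diff_distrib sum_subtractf)
  also have "\<dots> = (- 2 * complex_of_real c * Ac m c j 0) * g m
     + (\<Sum>k<m. (of_nat (2*(m-k)) * Ac m c j k - 2 * complex_of_real c * Ac m c j (Suc k)) * g (m - Suc k))"
    unfolding S1 S2 by (simp add: algebra_simps sum_subtractf sum.distrib)
  also have "\<dots> = \<i> * (\<Sum>k\<le>m. Ac m c (Suc j) k * g (m-k))"
    unfolding S3 Ac_rec0 Ac_rec1 by (simp add: mult.assoc)
  finally show ?thesis .
qed

definition Gf :: "real \<Rightarrow> nat \<Rightarrow> real \<Rightarrow> real" where
  "Gf c i x = x^(2*i) * exp (- c * x^2)"

lemma Gf_deriv: "(Gf c i has_real_derivative x * (real (2*i) * Gf c (i-1) x - 2 * c * Gf c i x)) (at x)"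
proof -
  have "((\<lambda>x. x^(2*i) * exp (- c * x^2)) has_real_derivative
      (real (2*i) * x^(2*i - 1) * exp (- c * x^2) + x^(2*i) * (exp (- c * x^2) * (- c * (2 * x))))) (at x)"
    by (auto intro!: derivative_eq_intros simp: algebra_simps)
  moreover have "real (2*i) * x^(2*i - 1) * exp (- c * x^2) + x^(2*i) * (exp (- c * x^2) * (- c * (2 * x)))
      = x * (real (2*i) * Gf c (i-1) x - 2 * c * Gf c i x)"
  proof (cases i)
    case 0 then show ?thesis by (simp add: Gf_def algebra_simps)
  next
    case (Suc i')
    then have "2*i - 1 = Suc (2*i')" "2*(i-1) = 2*i'" "2*i = Suc (Suc (2*i'))" by auto
    then show ?thesis by (simp add: Gf_def algebra_simps)
  qed
  ultimately show ?thesis unfolding Gf_def by simp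
qed

definition Tf :: "nat \<Rightarrow> real \<Rightarrow> nat \<Rightarrow> real \<Rightarrow> complex" where
  "Tf m c j x = (\<Sum>k\<le>m. Ac m c j k * complex_of_real (Gf c (m-k) x))"

lemma Tf_deriv: "(Tf m c j has_vector_derivative (\<i> * (complex_of_real x * Tf m c (Suc j) x))) (at x)"
proof -
  have D: "(Tf m c j has_vector_derivative (\<Sum>k\<le>m. Ac m c j k * complex_of_real
      (x * (real (2*(m-k)) * Gf c (m-k-1) x - 2 * c * Gf c (m-k) x)))) (at x)"
    unfolding Tf_def
    by (intro has_vector_derivative_sum has_vector_derivative_mult_right has_vector_derivative_of_real Gf_deriv)
  have "(\<Sum>k\<le>m. Ac m c j k * complex_of_real
      (x * (real (2*(m-k)) * Gf c (m-k-1) x - 2 * c * Gf c (m-k) x)))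
    = complex_of_real x * (\<Sum>k\<le>m. Ac m c j k * (of_nat (2*(m-k)) * complex_of_real (Gf c (m-k-1) x)
          - 2 * complex_of_real c * complex_of_real (Gf c (m-k) x)))"
    unfolding sum_distrib_left by (intro sum.cong refl) (simp add: algebra_simps)
  also have "\<dots> = \<i> * (complex_of_real x * Tf m c (Suc j) x)"
    unfolding Ac_sum[of m c j "\<lambda>i. complex_of_real (Gf c i x)"] Tf_def by (simp add: algebra_simps)
  finally have eq: "(\<Sum>k\<le>m. Ac m c j k * complex_of_real
      (x * (real (2*(m-k)) * Gf c (m-k-1) x - 2 * c * Gf c (m-k) x))) = \<i> * (complex_of_real x * Tf m c (Suc j) x)" .
  show ?thesis using D unfolding eq .
qed

lemma Gf_bound: "i \<le> m \<Longrightarrow> \<bar>Gf c i x\<bar> \<le> (1 + x^2)^m * exp (- c * x^2)"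
proof -
  assume "i \<le> m"
  have "x^(2*i) = (x^2)^i" by (simp add: power_mult)
  also have "\<dots> \<le> (1 + x^2)^i" by (intro power_mono) auto
  also have "\<dots> \<le> (1 + x^2)^m" using \<open>i \<le> m\<close> by (intro power_increasing) auto
  finally show ?thesis unfolding Gf_def by (simp add: abs_mult)
qed

lemma comb_bound:
  "cmod (\<Sum>k\<le>m. a k * complex_of_real (Gf c (m-k) x)) \<le> (\<Sum>k\<le>m. cmod (a k)) * ((1 + x^2)^m * exp (- c * x^2))"
proof -
  have "cmod (\<Sum>k\<le>m. a k * complex_of_real (Gf c (m-k) x)) \<le> (\<Sum>k\<le>m. cmod (a k * complex_of_real (Gf c (m-k) x)))"
    by (rule norm_sum)
  also have "\<dots> \<le> (\<Sum>k\<le>m. cmod (a k) * ((1 + x^2)^m * exp (- c * x^2)))"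
    apply (intro sum_mono)
    subgoal for k using Gf_bound[of "m-k" m c x] by (simp add: norm_mult mult_left_mono)
    done
  finally show ?thesis by (simp add: sum_distrib_right)
qed

lemma comb_bound_x:
  "cmod (complex_of_real x * (\<Sum>k\<le>m. a k * complex_of_real (Gf c (m-k) x))) \<le> (\<Sum>k\<le>m. cmod (a k)) * ((1 + x^2)^(Suc m) * exp (- c * x^2))"
proof -
  have ax: "\<bar>x\<bar> \<le> 1 + x^2"
  proof (cases "\<bar>x\<bar> \<le> 1")
    case True then show ?thesis using zero_le_power2[of x] by linarith
  next
    case False then have "\<bar>x\<bar> * 1 \<le> \<bar>x\<bar> * \<bar>x\<bar>" by (intro mult_left_mono) auto
    moreover have "\<bar>x\<bar> * \<bar>x\<bar> = x^2" by (simp add: power2_eq_square abs_mult_self_eq)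
    ultimately show ?thesis by linarith
  qed
  have "cmod (complex_of_real x * (\<Sum>k\<le>m. a k * complex_of_real (Gf c (m-k) x))) \<le> \<bar>x\<bar> * ((\<Sum>k\<le>m. cmod (a k)) * ((1 + x^2)^m * exp (- c * x^2)))"
    unfolding norm_mult by (intro mult_mono comb_bound) auto
  also have "\<dots> \<le> (1 + x^2) * ((\<Sum>k\<le>m. cmod (a k)) * ((1 + x^2)^m * exp (- c * x^2)))"
    by (intro mult_right_mono ax mult_nonneg_nonneg sum_nonneg) auto
  finally show ?thesis by (simp add: algebra_simps)
qed

lemma comb_meas: "(\<lambda>x. \<Sum>k\<le>m. a k * complex_of_real (Gf c (m-k) x)) \<in> borel_measurable lborel"
proof -
  have "continuous_on UNIV (\<lambda>x. \<Sum>k\<le>m. a k * complex_of_real (Gf c (m-k) x))"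
    unfolding Gf_def by (intro continuous_intros)
  then show ?thesis using borel_measurable_continuous_onI by simp
qed

lemma sqint_comb: "0 < c \<Longrightarrow> sqint (\<lambda>x. \<Sum>k\<le>m. a k * complex_of_real (Gf c (m-k) x))"
  using sqint_bound[OF comb_meas _ comb_bound] by blast

lemma l2norm_comb: "0 < c \<Longrightarrow> l2norm (\<lambda>x. \<Sum>k\<le>m. a k * complex_of_real (Gf c (m-k) x))
   \<le> (\<Sum>k\<le>m. cmod (a k)) * sqrt (LINT x|lborel. (1 + x^2)^(2*m) * exp (- (2*c) * x^2))"
  using sqint_bound[OF comb_meas _ comb_bound] by blast

lemma sqint_comb_x: "0 < c \<Longrightarrow> sqint (\<lambda>x. complex_of_real x * (\<Sum>k\<le>m. a k * complex_of_real (Gf c (m-k) x)))"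
proof -
  assume c: "0 < c"
  have "(\<lambda>x. complex_of_real x * (\<Sum>k\<le>m. a k * complex_of_real (Gf c (m-k) x))) \<in> borel_measurable lborel"
  proof -
    have "continuous_on UNIV (\<lambda>x. complex_of_real x * (\<Sum>k\<le>m. a k * complex_of_real (Gf c (m-k) x)))"
      unfolding Gf_def by (intro continuous_intros)
    then show ?thesis using borel_measurable_continuous_onI by simp
  qed
  then show ?thesis using sqint_bound[OF _ c comb_bound_x] by blast
qed

lemma Tf_cont: "continuous_on UNIV (Tf m c j)"
  by (intro continuous_at_imp_continuous_on ballI has_vector_derivative_continuous[OF Tf_deriv])

lemma t_rel_Tf: "0 < c \<Longrightarrow> t_rel (Tf m c j) (Tf m c (Suc j))"
proof -
  assume c: "0 < c"
  define g where "g x = complex_of_real x * Tf m c (Suc j) x" for x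
  have "p_rel (Tf m c j) g"
  proof (rule p_rel_smooth)
    show "(Tf m c j has_vector_derivative \<i> * g x) (at x)" for x unfolding g_def by (rule Tf_deriv)
    show "continuous_on UNIV g" unfolding g_def by (intro continuous_intros Tf_cont)
    show "sqint (Tf m c j)" unfolding Tf_def[abs_def] using sqint_comb[OF c] .
    show "sqint g" unfolding g_def[abs_def] Tf_def using sqint_comb_x[OF c] .
  qed
  moreover have "sqint (Tf m c (Suc j))" unfolding Tf_def[abs_def] using sqint_comb[OF c] .
  moreover have "AE x in lborel. Tf m c (Suc j) x = g x / complex_of_real x"
    using AE_lborel_singleton[of 0] by eventually_elim (simp add: g_def)
  ultimately show ?thesis unfolding t_rel_def by blast
qed

definition bco :: "nat \<Rightarrow> real" where "bco n = (1 - (-1)^n) / real n"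

lemma F_sums:
  fixes a :: real assumes a: "\<bar>a\<bar> < 1"
  shows "(\<lambda>n. bco n * a^n) sums ln ((1 + a) / (1 - a))"
proof -
  have s1: "(\<lambda>n. - ((-a)^n) / of_nat n) sums ln (1 + a)" using ln_series'[OF a] .
  have s2: "(\<lambda>n. - ((-(-a))^n) / of_nat n) sums ln (1 + (-a))" using ln_series'[of "-a"] a by simp
  have "(\<lambda>n. - ((-a)^n) / of_nat n - - ((-(-a))^n) / of_nat n) sums (ln (1 + a) - ln (1 + (-a)))"
    by (rule sums_diff[OF s1 s2])
  moreover have "(\<lambda>n. - ((-a)^n) / of_nat n - - ((-(-a))^n) / of_nat n) = (\<lambda>n. bco n * a^n)"
  proof
    fix n
    have "- ((-a)^n) / of_nat n - - ((-(-a))^n) / of_nat n = (a^n - (-a)^n) / of_nat n"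
      by (simp add: diff_divide_distrib)
    also have "a^n - (-a)^n = (1 - (-1)^n) * a^n" by (simp add: power_minus' algebra_simps)
    finally show "- ((-a)^n) / of_nat n - - ((-(-a))^n) / of_nat n = bco n * a^n"
      by (simp add: bco_def)
  qed
  moreover have "ln (1 + a) - ln (1 + (-a)) = ln ((1 + a) / (1 - a))"
  proof -
    have "1 + a > 0" "1 - a > 0" using a by auto
    then show ?thesis by (simp add: ln_div)
  qed
  ultimately show ?thesis by simp
qed

lemma dsum: "\<bar>z\<bar> < 1 \<Longrightarrow> summable (\<lambda>n. (diffs ^^ k) bco n * z^n)"
proof (induction k arbitrary: z)
  case 0
  have "summable (\<lambda>n. bco n * z^n)" by (rule sums_summable[OF F_sums[OF 0]])
  then show ?case by simp
next
  case (Suc k)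
  have "summable (\<lambda>n. diffs ((diffs ^^ k) bco) n * z^n)"
    by (rule termdiff_converges[where K=1]) (use Suc in auto)
  then show ?case by simp
qed

lemma deriv_F:
  "\<bar>a\<bar> < 1 \<Longrightarrow> (deriv ^^ k) (\<lambda>a. ln ((1 + a) / (1 - a))) a = (\<Sum>n. (diffs ^^ k) bco n * a^n)"
proof (induction k arbitrary: a)
  case 0
  have "ln ((1 + a) / (1 - a)) = (\<Sum>n. bco n * a^n)" by (rule sums_unique[OF F_sums[OF 0]])
  then show ?case by simp
next
  case (Suc k)
  have ev: "eventually (\<lambda>y. (deriv ^^ k) (\<lambda>a. ln ((1 + a) / (1 - a))) y = (\<Sum>n. (diffs ^^ k) bco n * y^n)) (nhds a)"
  proof -
    have "eventually (\<lambda>y. y \<in> {-1<..<1::real}) (nhds a)"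
      by (rule eventually_nhds_in_open) (use Suc.prems in auto)
    then show ?thesis by (rule eventually_mono) (use Suc.IH in auto)
  qed
  have "(deriv ^^ Suc k) (\<lambda>a. ln ((1 + a) / (1 - a))) a = deriv ((deriv ^^ k) (\<lambda>a. ln ((1 + a) / (1 - a)))) a"
    by simp
  also have "\<dots> = deriv (\<lambda>y. \<Sum>n. (diffs ^^ k) bco n * y^n) a"
    by (rule deriv_cong_ev[OF ev refl])
  also have "\<dots> = (\<Sum>n. diffs ((diffs ^^ k) bco) n * a^n)"
  proof (rule DERIV_imp_deriv, rule termdiffs_strong'[where K=1])
    show "\<And>z::real. norm z < 1 \<Longrightarrow> summable (\<lambda>n. (diffs ^^ k) bco n * z ^ n)" using dsum by simp
  qed (use Suc.prems in simp)
  finally show ?case by simp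
qed

lemma ff_Suc2: "ff n (Suc k) = real (n - k) * ff n k"
  unfolding ff_def using choose_rel[of n k] by (simp add: algebra_simps)

lemma diffs_pow: "(diffs ^^ k) bco i = bco (i + k) * ff (i + k) k"
proof (induction k arbitrary: i)
  case 0 then show ?case by simp
next
  case (Suc k)
  have "(diffs ^^ Suc k) bco i = real (Suc i) * (diffs ^^ k) bco (Suc i)"
    by (simp only: funpow.simps o_apply diffs_def)
  also have "\<dots> = real (Suc i) * (bco (Suc i + k) * ff (Suc i + k) k)"
    by (simp only: Suc.IH)
  also have "\<dots> = bco (i + Suc k) * ff (i + Suc k) (Suc k)"
    using ff_Suc2[of "i + Suc k" k] by simp
  finally show ?case .
qed

lemma sum_odd:
  fixes g :: "nat \<Rightarrow> 'a::comm_monoid_add" and N :: nat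
  assumes z: "\<And>n. g (2*n) = 0"
  shows "(\<Sum>j<2*N+2. g j) = (\<Sum>n\<le>N. g (2*n+1))"
proof (induction N)
  case 0 then show ?case using z[of 0] by (simp add: numeral_2_eq_2)
next
  case (Suc N)
  have e: "2 * Suc N + 2 = Suc (Suc (2*N+2))" by simp
  have "(\<Sum>j<2 * Suc N + 2. g j) = (\<Sum>j<2*N+2. g j) + g (2*N+2) + g (2*N+3)"
    unfolding e by (simp add: numeral_3_eq_3)
  also have "g (2*N+2) = 0" using z[of "Suc N"] by simp
  finally show ?case using Suc by (simp add: numeral_3_eq_3)
qed

lemma sum_shift0:
  fixes g :: "nat \<Rightarrow> 'a::comm_monoid_add"
  assumes z: "\<And>j. j < k \<Longrightarrow> g j = 0"
  shows "(\<Sum>j<M. g j) = (\<Sum>i<M-k. g (i+k))"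
proof (cases "M \<le> k")
  case True then show ?thesis using z by simp
next
  case False
  have "{..<M} = {..<k} \<union> {k..<M}" using False by auto
  then have "(\<Sum>j<M. g j) = sum g ({..<k} \<union> {k..<M})" by simp
  also have "\<dots> = (\<Sum>j<k. g j) + (\<Sum>j\<in>{k..<M}. g j)"
    by (rule sum.union_disjoint) auto
  also have "(\<Sum>j<k. g j) = 0" using z by simp
  also have "{k..<M} = {0+k..<(M-k)+k}" using False by simp
  also have "sum g \<dots> = (\<Sum>i\<in>{0..<M-k}. g (i+k))" by (rule sum.shift_bounds_nat_ivl)
  finally show ?thesis by (simp add: atLeast0LessThan)
qed

definition PS :: "real \<Rightarrow> nat \<Rightarrow> nat \<Rightarrow> real" where
  "PS \<alpha> k N = (\<Sum>n\<le>N. ff (2*n+1) k / real (2*n+1) * \<alpha>^(2*n+1-k))"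

lemma PS_eq: "2 * PS \<alpha> k N = (\<Sum>i<2*N+2-k. (diffs ^^ k) bco i * \<alpha>^i)"
proof -
  define g where "g j = bco j * ff j k * \<alpha>^(j-k)" for j
  have "(\<Sum>j<2*N+2. g j) = (\<Sum>n\<le>N. g (2*n+1))"
    by (rule sum_odd) (simp add: g_def bco_def)
  also have "\<dots> = 2 * PS \<alpha> k N"
    unfolding PS_def sum_distrib_left by (intro sum.cong refl) (simp add: g_def bco_def)
  finally have 1: "2 * PS \<alpha> k N = (\<Sum>j<2*N+2. g j)" by simp
  have "(\<Sum>j<2*N+2. g j) = (\<Sum>i<2*N+2-k. g (i+k))"
    by (rule sum_shift0) (simp add: g_def ff_zero)
  also have "\<dots> = (\<Sum>i<2*N+2-k. (diffs ^^ k) bco i * \<alpha>^i)"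
    by (intro sum.cong refl) (simp add: g_def diffs_pow)
  finally show ?thesis using 1 by simp
qed

lemma PS_lim:
  assumes a: "\<bar>\<alpha>\<bar> < 1"
  shows "(\<lambda>N. PS \<alpha> k N) \<longlonglongrightarrow> (deriv ^^ k) (\<lambda>a. ln ((1 + a) / (1 - a))) \<alpha> / 2"
proof -
  have S: "(\<lambda>M. \<Sum>i<M. (diffs ^^ k) bco i * \<alpha>^i) \<longlonglongrightarrow> (deriv ^^ k) (\<lambda>a. ln ((1 + a) / (1 - a))) \<alpha>"
    unfolding deriv_F[OF a] by (rule summable_LIMSEQ[OF dsum[OF a]])
  have h: "filterlim (\<lambda>N::nat. 2*N+2-k) at_top sequentially"
    unfolding filterlim_at_top eventually_sequentially
  proof (intro allI)
    fix Z show "\<exists>N. \<forall>n\<ge>N. Z \<le> 2*n+2-k" by (rule exI[of _ "Z+k"]) auto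
  qed
  have "(\<lambda>N. \<Sum>i<2*N+2-k. (diffs ^^ k) bco i * \<alpha>^i) \<longlonglongrightarrow> (deriv ^^ k) (\<lambda>a. ln ((1 + a) / (1 - a))) \<alpha>"
    by (rule filterlim_compose[OF S h])
  then have "(\<lambda>N. (2 * PS \<alpha> k N) / 2) \<longlonglongrightarrow> (deriv ^^ k) (\<lambda>a. ln ((1 + a) / (1 - a))) \<alpha> / 2"
    unfolding PS_eq by (intro tendsto_divide) auto
  then show ?thesis by simp
qed

lemma i_pow_odd: "(2*\<i>)^(2*n+1) = \<i> * complex_of_real ((-1)^n * 2^(2*n+1))"
proof -
  have "(2*\<i>)^(2*n+1) = 2^(2*n+1) * (\<i> * (\<i>^2)^n)"
    by (simp add: power_mult_distrib power_add power_mult[symmetric])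
  then show ?thesis by simp
qed

lemma coef_id:
  assumes s: "sq > 0" and al: "\<alpha> = 2 * sq * c"
  shows "complex_of_real ((-1)^n / real (2*n+1) * sq^(2*n+1)) * Ac m c (2*n+1) k
     = of_nat (m choose k) * \<i> * complex_of_real ((-2 * sq)^k * (ff (2*n+1) k / real (2*n+1) * \<alpha>^(2*n+1-k)))"
proof (cases "k \<le> 2*n+1")
  case False then show ?thesis by (simp add: Ac_def ff_zero)
next
  case True
  define r where "r = 2*n+1-k"
  define W where "W = (-1::real)^n / real (2*n+1) * sq^(2*n+1)"
  define F where "F = ff (2*n+1) k"
  have nr: "2*n+1 = k + r" using True by (simp add: r_def)
  have A: "Ac m c (2*n+1) k = of_nat (m choose k) * \<i> * complex_of_real ((-1)^k * ((-1)^n * 2^(2*n+1)) * (F * c^r))"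
    unfolding Ac_def i_pow_odd r_def[symmetric] F_def[symmetric]
    by (simp only: of_real_mult of_real_power of_real_minus of_real_1 mult_ac)
  have e1: "sq^(2*n+1) * 2^(2*n+1) * c^r = (2 * sq)^k * \<alpha>^r"
    unfolding nr al by (simp add: power_add power_mult_distrib)
  have e2: "((-1::real)^n * (-1)^n) = 1"
  proof -
    have "((-1::real)^n * (-1)^n) = ((-1) * (-1))^n" by (rule power_mult_distrib[symmetric])
    then show ?thesis by simp
  qed
  have e3: "(-2 * sq)^k = (-1)^k * (2 * sq)^k"
  proof -
    have "(-2 * sq) = (-1) * (2 * sq)" by simp
    then show ?thesis by (simp only: power_mult_distrib)
  qed
  have "W * ((-1)^k * ((-1)^n * 2^(2*n+1)) * (F * c^r))
      = ((-1)^n * (-1)^n) * (-1)^k * (sq^(2*n+1) * 2^(2*n+1) * c^r) * F / real (2*n+1)"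
    unfolding W_def by (simp only: divide_inverse mult_ac)
  also have "\<dots> = (-1)^k * (2 * sq)^k * (F / real (2*n+1) * \<alpha>^r)"
    unfolding e1 e2 by (simp only: divide_inverse mult_ac mult_1_left mult_1_right)
  also have "\<dots> = (-2 * sq)^k * (F / real (2*n+1) * \<alpha>^r)" unfolding e3 ..
  finally have R: "W * ((-1)^k * ((-1)^n * 2^(2*n+1)) * (F * c^r)) = (-2 * sq)^k * (F / real (2*n+1) * \<alpha>^r)" .
  have "complex_of_real W * Ac m c (2*n+1) k = of_nat (m choose k) * \<i> * complex_of_real (W * ((-1)^k * ((-1)^n * 2^(2*n+1)) * (F * c^r)))"
    unfolding A by (simp only: of_real_mult mult_ac)
  from this[unfolded R] show ?thesis unfolding W_def F_def r_def .
qed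

theorem lemma3p5:
  fixes \<epsilon> \<alpha> :: real and m :: nat
  assumes "0 < \<epsilon>" "\<epsilon> \<le> 1" "0 < \<alpha>" "\<alpha> < 1"
  shows "(\<lambda>x. complex_of_real (x^(2*m) * exp (- \<alpha> * x^2 / (2 * sqrt \<epsilon>)))) \<in> S_dom \<epsilon> \<and>
         S_graph \<epsilon> (\<lambda>x. complex_of_real (x^(2*m) * exp (- \<alpha> * x^2 / (2 * sqrt \<epsilon>))))
           (\<lambda>x. - (\<i> / complex_of_real (2 * sqrt \<epsilon>)) *
              complex_of_real (\<Sum>k\<le>m. real (m choose k) * (- 2 * sqrt \<epsilon>)^k *
                 (deriv ^^ k) (\<lambda>a. ln ((1 + a) / (1 - a))) \<alpha> *
                 x^(2*m - 2*k) * exp (- \<alpha> * x^2 / (2 * sqrt \<epsilon>))))"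
proof -
  have s: "sqrt \<epsilon> > 0" using assms(1) by simp
  define c where "c = \<alpha> / (2 * sqrt \<epsilon>)"
  have c: "c > 0" using s assms(3) by (simp add: c_def)
  have al: "\<alpha> = 2 * sqrt \<epsilon> * c" using s by (simp add: c_def)
  have a1: "\<bar>\<alpha>\<bar> < 1" using assms by simp
  define f where "f = (\<lambda>x. complex_of_real (x^(2*m) * exp (- \<alpha> * x^2 / (2 * sqrt \<epsilon>))))"
  define D where "D k = (deriv ^^ k) (\<lambda>a. ln ((1 + a) / (1 - a))) \<alpha>" for k
  define h where "h = (\<lambda>x. - (\<i> / complex_of_real (2 * sqrt \<epsilon>)) *
              complex_of_real (\<Sum>k\<le>m. real (m choose k) * (- 2 * sqrt \<epsilon>)^k *
                 (deriv ^^ k) (\<lambda>a. ln ((1 + a) / (1 - a))) \<alpha> *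
                 x^(2*m - 2*k) * exp (- \<alpha> * x^2 / (2 * sqrt \<epsilon>))))"
  define T where "T = Tf m c"
  define l where "l k = of_nat (m choose k) * \<i> * complex_of_real ((-2 * sqrt \<epsilon>)^k * (D k / 2))" for k
  define L where "L x = (\<Sum>k\<le>m. l k * complex_of_real (Gf c (m-k) x))" for x
  define w where "w n = complex_of_real ((-1)^n / real (2*n+1) * (sqrt \<epsilon>)^(2*n+1))" for n :: nat
  have ex: "exp (- \<alpha> * x^2 / (2 * sqrt \<epsilon>)) = exp (- c * x^2)" for x
  proof -
    have "- \<alpha> * x^2 / (2 * sqrt \<epsilon>) = - c * x^2" using s by (simp add: c_def field_simps)
    then show ?thesis by simp
  qed
  have T0: "T 0 = f"
  proof
    fix x
    have "T 0 x = (\<Sum>k\<le>m. if k = 0 then complex_of_real (Gf c m x) else 0)"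
      unfolding T_def Tf_def by (intro sum.cong refl) (simp add: Ac_def ff_def)
    also have "\<dots> = complex_of_real (Gf c m x)" by simp
    also have "\<dots> = f x" by (simp only: f_def Gf_def ex)
    finally show "T 0 x = f x" .
  qed
  have trel: "\<forall>j. t_rel (T j) (T (Suc j))" unfolding T_def using t_rel_Tf[OF c] by blast
  have sqL: "sqint L" unfolding L_def[abs_def] using sqint_comb[OF c] .
  have sqf: "sqint f" unfolding T0[symmetric] T_def Tf_def[abs_def] using sqint_comb[OF c] .
  have evf: "even_fun f" unfolding even_fun_def f_def by (intro AE_I2) (simp add: power_mult)
  define e where "e N k = (\<Sum>n\<le>N. w n * Ac m c (2*n+1) k) - l k" for N k
  have eq: "(\<lambda>x. (\<Sum>n\<le>N. w n * T (2*n+1) x) - L x) = (\<lambda>x. \<Sum>k\<le>m. e N k * complex_of_real (Gf c (m-k) x))" for N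
  proof
    fix x
    have "(\<Sum>n\<le>N. w n * T (2*n+1) x) = (\<Sum>n\<le>N. \<Sum>k\<le>m. w n * Ac m c (2*n+1) k * complex_of_real (Gf c (m-k) x))"
      unfolding T_def Tf_def sum_distrib_left by (simp add: mult.assoc)
    also have "\<dots> = (\<Sum>k\<le>m. \<Sum>n\<le>N. w n * Ac m c (2*n+1) k * complex_of_real (Gf c (m-k) x))"
      by (rule sum.swap)
    also have "\<dots> = (\<Sum>k\<le>m. (\<Sum>n\<le>N. w n * Ac m c (2*n+1) k) * complex_of_real (Gf c (m-k) x))"
      by (simp add: sum_distrib_right)
    finally show "(\<Sum>n\<le>N. w n * T (2*n+1) x) - L x = (\<Sum>k\<le>m. e N k * complex_of_real (Gf c (m-k) x))"
      unfolding L_def e_def by (simp add: sum_subtractf left_diff_distrib)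
  qed
  have ek: "e N k = of_nat (m choose k) * \<i> * complex_of_real ((-2 * sqrt \<epsilon>)^k * PS \<alpha> k N) - l k" for N k
  proof -
    have "(\<Sum>n\<le>N. w n * Ac m c (2*n+1) k) = (\<Sum>n\<le>N. of_nat (m choose k) * \<i> *
        complex_of_real ((-2 * sqrt \<epsilon>)^k * (ff (2*n+1) k / real (2*n+1) * \<alpha>^(2*n+1-k))))"
      unfolding w_def by (intro sum.cong refl coef_id[OF s al])
    also have "\<dots> = of_nat (m choose k) * \<i> * complex_of_real ((-2 * sqrt \<epsilon>)^k * PS \<alpha> k N)"
      unfolding PS_def sum_distrib_left[symmetric] of_real_sum[symmetric] by simp
    finally show ?thesis unfolding e_def by simp
  qed
  have e0: "(\<lambda>N. e N k) \<longlonglongrightarrow> 0" for k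
  proof -
    have "(\<lambda>N. of_nat (m choose k) * \<i> * complex_of_real ((-2 * sqrt \<epsilon>)^k * PS \<alpha> k N))
        \<longlonglongrightarrow> of_nat (m choose k) * \<i> * complex_of_real ((-2 * sqrt \<epsilon>)^k * (D k / 2))"
      unfolding D_def by (intro tendsto_intros PS_lim a1)
    then have "(\<lambda>N. of_nat (m choose k) * \<i> * complex_of_real ((-2 * sqrt \<epsilon>)^k * PS \<alpha> k N) - l k) \<longlonglongrightarrow> l k - l k"
      unfolding l_def by (intro tendsto_diff tendsto_const)
    then show ?thesis unfolding ek by simp
  qed
  define K where "K = sqrt (LINT x|lborel. (1 + x^2)^(2*m) * exp (- (2*c) * x^2))"
  have bnd: "l2norm (\<lambda>x. (\<Sum>n\<le>N. w n * T (2*n+1) x) - L x) \<le> (\<Sum>k\<le>m. cmod (e N k)) * K" for N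
    unfolding eq K_def by (rule l2norm_comb[OF c])
  have sum0: "(\<lambda>N. (\<Sum>k\<le>m. cmod (e N k)) * K) \<longlonglongrightarrow> 0"
  proof -
    have "(\<lambda>N. (\<Sum>k\<le>m. cmod (e N k)) * K) \<longlonglongrightarrow> (\<Sum>k\<le>m. 0) * K"
      by (intro tendsto_mult tendsto_const tendsto_sum tendsto_norm_zero e0)
    then show ?thesis by simp
  qed
  have conv: "(\<lambda>N. l2norm (\<lambda>x. (\<Sum>n\<le>N. w n * T (2*n+1) x) - L x)) \<longlonglongrightarrow> 0"
  proof (rule tendsto_sandwich[OF _ _ tendsto_const sum0])
    show "\<forall>\<^sub>F N in sequentially. 0 \<le> l2norm (\<lambda>x. (\<Sum>n\<le>N. w n * T (2*n+1) x) - L x)"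
      by (simp add: l2norm_def)
    show "\<forall>\<^sub>F N in sequentially. l2norm (\<lambda>x. (\<Sum>n\<le>N. w n * T (2*n+1) x) - L x) \<le> (\<Sum>k\<le>m. cmod (e N k)) * K"
      using bnd by simp
  qed
  have hL: "h x = - complex_of_real (1 / sqrt \<epsilon>) * L x" for x
  proof -
    have "h x = (\<Sum>k\<le>m. - (\<i> / complex_of_real (2 * sqrt \<epsilon>)) * complex_of_real (real (m choose k) * (- 2 * sqrt \<epsilon>)^k *
                 D k * x^(2*m - 2*k) * exp (- \<alpha> * x^2 / (2 * sqrt \<epsilon>))))"
      unfolding h_def D_def of_real_sum sum_distrib_left ..
    also have "\<dots> = (\<Sum>k\<le>m. - complex_of_real (1 / sqrt \<epsilon>) * (l k * complex_of_real (Gf c (m-k) x)))"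
    proof (intro sum.cong refl)
      fix k assume "k \<in> {..m}"
      have "2*m - 2*k = 2*(m-k)" by simp
      then show "- (\<i> / complex_of_real (2 * sqrt \<epsilon>)) * complex_of_real (real (m choose k) * (- 2 * sqrt \<epsilon>)^k *
                 D k * x^(2*m - 2*k) * exp (- \<alpha> * x^2 / (2 * sqrt \<epsilon>)))
            = - complex_of_real (1 / sqrt \<epsilon>) * (l k * complex_of_real (Gf c (m-k) x))"
        using s unfolding l_def Gf_def ex by (simp add: field_simps)
    qed
    also have "\<dots> = - complex_of_real (1 / sqrt \<epsilon>) * L x"
      unfolding L_def sum_distrib_left ..
    finally show ?thesis .
  qed
  have SG: "S_graph \<epsilon> f h"
    unfolding S_graph_def
  proof (intro conjI sqf evf exI[of _ T] exI[of _ L] T0 trel sqL)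
    show "(\<lambda>N. l2norm (\<lambda>x. (\<Sum>n\<le>N. complex_of_real ((-1)^n / real (2*n+1) * (sqrt \<epsilon>)^(2*n+1)) * T (2*n+1) x) - L x)) \<longlonglongrightarrow> 0"
      using conv unfolding w_def .
    show "AE x in lborel. h x = - complex_of_real (1 / sqrt \<epsilon>) * L x"
      using hL by simp
  qed
  then have "f \<in> S_dom \<epsilon>" unfolding S_dom_def by blast
  with SG show ?thesis unfolding f_def h_def by blast
qed

end
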